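(* Let $K,M\in\mathbb{N}$, $L>0$, and let $\mathbf{x}$ be a random vector with probability density $p\colon\mathbb{R}^K\to\mathbb{R}_+$ supported on $[0,1]^K$ which is $L$-Lipschitz on $\mathbb{R}^K$ with respect to the $\ell_1$-norm. Let $\bar{\mathbf{x}}=\Delta_M(\mathbf{x})+\mathbf{u}$, where $\Delta_M$ acts element-wise by $\Delta_M(x)=\lfloor Mx\rfloor/M$ and $\mathbf{u}$ is uniform on $[0,\frac1M]^K$, independent of $\mathbf{x}$. Define $\eta(K,L):=\frac1K\big(\frac{2(K+1)!}{L}\big)^{\frac1{K+1}}$ and $\alpha:=\frac{\sqrt{e^2+4}-e}{2e}$. If $M\ge\frac{1}{\alpha\,\eta(K,L)}$, then \[ |h(\bar{\mathbf{x}})-h(\mathbf{x})|\le\frac{LK}{2M}\log\big(M\eta(K,L)\big). \]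
   Context: $h(\cdot)$ denotes differential entropy of a continuous random vector, $h(\mathbf{x})=-\int p\log p\,\mathrm{d}\lambda^K$. *)

theory Defs
  imports "HOL-Probability.Probability"
begin

text \<open>l1-distance on R^K (components indexed by the finite type 'n, K = CARD('n)).\<close>
definition l1_dist :: "real^'n \<Rightarrow> real^'n \<Rightarrow> real" where
  "l1_dist x y = (\<Sum>i\<in>UNIV. \<bar>x $ i - y $ i\<bar>)"

definition quantize :: "nat \<Rightarrow> real^'n \<Rightarrow> real^'n" where
  "quantize M x = (\<chi> i. real_of_int \<lfloor>real M * x $ i\<rfloor> / real M)"

definition diff_entropy :: "(real^'n \<Rightarrow> real) \<Rightarrow> real" where
  "diff_entropy p = - (\<integral>x. p x * ln (p x) \<partial>lborel)"

definition eta :: "nat \<Rightarrow> real \<Rightarrow> real" where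
  "eta K L = (1 / real K) * (2 * fact (K + 1) / L) powr (1 / real (K + 1))"

definition alpha :: real where
  "alpha = (sqrt (exp 2 + 4) - exp 1) / (2 * exp 1)"

end

theory Submission
  imports Defs
begin


definition kk :: "nat \<Rightarrow> real^'n \<Rightarrow> ('n \<Rightarrow> int)" where
  "kk M y = (\<lambda>i. \<lfloor>real M * y $ i\<rfloor>)"

definition cell :: "nat \<Rightarrow> ('n \<Rightarrow> int) \<Rightarrow> (real^'n) set" where
  "cell M z = {y. kk M y = z}"

lemma cell_sets[measurable]: "cell M z \<in> sets (borel :: (real^'n) measure)"
proof -
  have "cell M z = {y\<in>space borel. \<forall>i. \<lfloor>real M * y $ i\<rfloor> = z i}"
    by (auto simp: cell_def kk_def fun_eq_iff)
  also have "\<dots> \<in> sets borel" by measurable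
  finally show ?thesis .
qed

lemma cell_sets_lborel[measurable]: "cell M z \<in> sets lborel"
  by simp

lemma emeasure_cbox_c:
  fixes a :: "real^'n"
  assumes "d \<ge> 0"
  shows "emeasure lborel (cbox a (a + (\<chi> i. d))) = ennreal (d ^ CARD('n))"
    "emeasure lborel (box a (a + (\<chi> i. d))) = ennreal (d ^ CARD('n))"
proof -
  have 1: "(\<Prod>b\<in>Basis. (a + (\<chi> i. d) - a) \<bullet> b) = (\<Prod>b\<in>(Basis::(real^'n) set). d)"
    by (rule prod.cong) (auto simp: Basis_vec_def cart_eq_inner_axis[symmetric])
  have 2: "\<forall>b\<in>Basis. a \<bullet> b \<le> (a + (\<chi> i. d)) \<bullet> b" using assms by (auto simp: Basis_vec_def inner_add_left cart_eq_inner_axis[symmetric])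
  show "emeasure lborel (cbox a (a + (\<chi> i. d))) = ennreal (d ^ CARD('n))"
    unfolding emeasure_lborel_cbox_eq using 1 2 by simp
  show "emeasure lborel (box a (a + (\<chi> i. d))) = ennreal (d ^ CARD('n))"
    unfolding emeasure_lborel_box_eq using 1 2 by simp
qed



lemma cell_iff:
  assumes "M > 0"
  shows "y \<in> cell M z \<longleftrightarrow> (\<forall>i. real_of_int (z i) / real M \<le> y $ i \<and> y $ i < real_of_int (z i) / real M + 1 / real M)"
proof -
  have "\<lfloor>real M * y $ i\<rfloor> = z i \<longleftrightarrow> (real_of_int (z i) / real M \<le> y $ i \<and> y $ i < real_of_int (z i) / real M + 1 / real M)" for i
    using assms by (simp add: floor_eq_iff field_simps)
  then show ?thesis by (auto simp: cell_def kk_def fun_eq_iff)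
qed

lemma cell_box:
  fixes z :: "'n::finite \<Rightarrow> int"
  assumes "M > 0"
  defines "a \<equiv> (\<chi> i. real_of_int (z i) / real M) :: real^'n"
  shows "box a (a + (\<chi> i. 1 / real M)) \<subseteq> cell M z" "cell M z \<subseteq> cbox a (a + (\<chi> i. 1 / real M))"
  using assms by (auto simp: cell_iff mem_box_cart a_def less_imp_le)

lemma emeasure_cell:
  assumes "M > 0"
  shows "emeasure lborel (cell M z :: (real^'n) set) = ennreal ((1 / real M) ^ CARD('n))"
proof -
  define a where "a \<equiv> (\<chi> i. real_of_int (z i) / real M) :: real^'n"
  have "emeasure lborel (box a (a + (\<chi> i. 1 / real M))) \<le> emeasure lborel (cell M z)"
    using cell_box[OF assms, of z] by (intro emeasure_mono) (auto simp: a_def)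
  moreover have "emeasure lborel (cell M z) \<le> emeasure lborel (cbox a (a + (\<chi> i. 1 / real M)))"
    using cell_box[OF assms, of z] by (intro emeasure_mono) (auto simp: a_def)
  ultimately show ?thesis using emeasure_cbox_c[of "1 / real M" a] by simp
qed

lemma measure_cell:
  assumes "M > 0"
  shows "measure lborel (cell M z :: (real^'n) set) = (1 / real M) ^ CARD('n)"
  using emeasure_cell[OF assms, of z] by (simp add: measure_def)

lemma AE_cbox_cell:
  assumes "M > 0"
  shows "AE u in lborel. (u \<in> cbox (0::real^'n) (\<chi> i. 1 / real M)) = (u \<in> cell M (\<lambda>i. 0))"
proof (rule AE_I')
  let ?c = "(\<chi> i. 1 / real M) :: real^'n"
  show "cbox 0 ?c - box 0 ?c \<in> null_sets lborel"
  proof -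
    have h1: "emeasure lborel (cbox 0 ?c) = ennreal ((1 / real M) ^ CARD('n))"
      using emeasure_cbox_c(1)[of "1/real M" "0::real^'n"] by simp
    have h2: "emeasure lborel (box 0 ?c) = ennreal ((1 / real M) ^ CARD('n))"
      using emeasure_cbox_c(2)[of "1/real M" "0::real^'n"] by simp
    have "emeasure lborel (cbox 0 ?c - box 0 ?c) = emeasure lborel (cbox 0 ?c) - emeasure lborel (box 0 ?c)"
      by (rule emeasure_Diff) (auto simp: box_subset_cbox h2)
    then show ?thesis using h1 h2 by (simp add: null_sets_def)
  qed
  show "{x \<in> space lborel. (x \<in> cbox 0 ?c) \<noteq> (x \<in> cell M (\<lambda>i. 0))} \<subseteq> cbox 0 ?c - box 0 ?c"
    using cell_box[OF assms, of "\<lambda>i. 0"] by (auto simp: zero_vec_def[symmetric])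
qed



lemma l1_dist_upd:
  fixes y :: "real^'n"
  shows "l1_dist y (\<chi> j. if j = i then t else y $ j) = \<bar>y $ i - t\<bar>"
proof -
  have "l1_dist y (\<chi> j. if j = i then t else y $ j) = (\<Sum>j\<in>UNIV. if j = i then \<bar>y $ i - t\<bar> else 0)"
    unfolding l1_dist_def by (rule sum.cong) auto
  then show ?thesis by simp
qed

lemma p_zero_ge1:
  fixes p :: "real^'n \<Rightarrow> real"
  assumes L: "L > 0"
    and p_nonneg: "\<And>x. p x \<ge> 0"
    and p_supp: "\<And>x. x \<notin> cbox 0 1 \<Longrightarrow> p x = 0"
    and p_lip: "\<And>x y. \<bar>p x - p y\<bar> \<le> L * l1_dist x y"
    and y: "y $ i \<ge> 1"
  shows "p y = 0"
proof (rule ccontr)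
  assume "p y \<noteq> 0"
  then have pos: "p y > 0" using p_nonneg[of y] by simp
  define e where "e = p y / (2 * L)"
  have e: "e > 0" using pos L by (simp add: e_def)
  define y' where "y' = (\<chi> j. if j = i then y $ i + e else y $ j)"
  have "y' \<notin> cbox 0 1" using y e by (auto simp: mem_box_cart y'_def intro!: exI[of _ i])
  then have "p y' = 0" by (rule p_supp)
  with p_lip[of y y'] have "p y \<le> L * \<bar>y $ i - (y $ i + e)\<bar>"
    unfolding y'_def l1_dist_upd by simp
  also have "\<dots> = L * e" using e by simp
  also have "\<dots> = p y / 2" using L by (simp add: e_def)
  finally show False using pos by simp
qed

lemma p_zero_out:
  fixes p :: "real^'n \<Rightarrow> real"
  assumes L: "L > 0"
    and p_nonneg: "\<And>x. p x \<ge> 0"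
    and p_supp: "\<And>x. x \<notin> cbox 0 1 \<Longrightarrow> p x = 0"
    and p_lip: "\<And>x y. \<bar>p x - p y\<bar> \<le> L * l1_dist x y"
    and y: "y $ i \<ge> 1 \<or> y $ i < 0"
  shows "p y = 0"
proof (cases "y $ i \<ge> 1")
  case True
  then show ?thesis using p_zero_ge1[OF assms(1-4)] by blast
next
  case False
  then have "y \<notin> cbox 0 1" using y by (auto simp: mem_box_cart intro!: exI[of _ i])
  then show ?thesis by (rule p_supp)
qed

lemma p_bounded:
  fixes p :: "real^'n \<Rightarrow> real"
  assumes L: "L > 0"
    and p_nonneg: "\<And>x. p x \<ge> 0"
    and p_supp: "\<And>x. x \<notin> cbox 0 1 \<Longrightarrow> p x = 0"
    and p_lip: "\<And>x y. \<bar>p x - p y\<bar> \<le> L * l1_dist x y"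
  shows "p y \<le> 2 * L"
proof (cases "y \<in> cbox 0 1")
  case True
  obtain i :: 'n where True by simp
  define y' where "y' = (\<chi> j. if j = i then 2 else y $ j)"
  have "y' \<notin> cbox 0 1" by (auto simp: mem_box_cart y'_def intro!: exI[of _ i])
  then have "p y' = 0" by (rule p_supp)
  with p_lip[of y y'] have "p y \<le> L * \<bar>y $ i - 2\<bar>"
    unfolding y'_def l1_dist_upd by simp
  also have "\<dots> \<le> L * 2" using True L by (intro mult_left_mono) (auto simp: mem_box_cart abs_le_iff dest: spec[of _ i])
  finally show ?thesis by simp
next
  case False
  then show ?thesis using p_supp[of y] L by simp
qed

lemma cell_close:
  fixes x y :: "real^'n"
  assumes M: "M > 0" and x: "x \<in> cell M z" and y: "y \<in> cell M z"
  shows "l1_dist x y \<le> real CARD('n) / real M"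
proof -
  have "\<bar>x $ i - y $ i\<bar> \<le> 1 / real M" for i
    using x y unfolding cell_iff[OF M] by (smt (verit))
  then have "l1_dist x y \<le> (\<Sum>i\<in>(UNIV::'n set). 1 / real M)"
    unfolding l1_dist_def by (intro sum_mono) auto
  then show ?thesis by simp
qed

lemma kk_notin:
  assumes M: "M > 0" and "kk M y \<notin> {z. \<forall>i. 0 \<le> z i \<and> z i < int M}"
  shows "\<exists>i. y $ i \<ge> 1 \<or> y $ i < 0"
proof -
  obtain i where "\<lfloor>real M * y $ i\<rfloor> < 0 \<or> \<lfloor>real M * y $ i\<rfloor> \<ge> int M"
    using assms(2) unfolding kk_def by (auto simp: not_less not_le)
  then have "real M * y $ i < 0 \<or> real M * y $ i \<ge> real M"
    by (metis floor_less_zero le_floor_iff of_int_of_nat_eq)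
  then have "y $ i < 0 \<or> y $ i \<ge> 1" using M
    by (metis mult_le_cancel_left1 mult_less_0_iff of_nat_0_less_iff of_nat_less_0_iff)
  then show ?thesis by blast
qed


lemma quantize_meas[measurable]: "quantize M \<in> borel_measurable (borel :: (real^'n) measure)"
proof (subst borel_measurable_euclidean_space, intro ballI)
  fix b :: "real^'n" assume "b \<in> Basis"
  then obtain j where b: "b = axis j 1" by (auto simp: Basis_vec_def)
  have "(\<lambda>x. quantize M x \<bullet> b) = (\<lambda>x. real_of_int \<lfloor>real M * x $ j\<rfloor> / real M)"
    by (auto simp: b quantize_def cart_eq_inner_axis[symmetric])
  moreover have "(\<lambda>x::real^'n. real_of_int \<lfloor>real M * x $ j\<rfloor> / real M) \<in> borel_measurable borel"
    by measurable
  ultimately show "(\<lambda>x. quantize M x \<bullet> b) \<in> borel_measurable borel" by simp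
qed


lemma cell_shift:
  assumes "M > 0"
  shows "(y - quantize M x \<in> cell M (\<lambda>i. 0)) = (y \<in> cell M (kk M x))"
proof -
  have "\<lfloor>real M * (y $ i - real_of_int \<lfloor>real M * x $ i\<rfloor> / real M)\<rfloor> = \<lfloor>real M * y $ i\<rfloor> - \<lfloor>real M * x $ i\<rfloor>" for i
  proof -
    have "real M * (y $ i - real_of_int \<lfloor>real M * x $ i\<rfloor> / real M) = real M * y $ i - real_of_int \<lfloor>real M * x $ i\<rfloor>"
      using assms by (simp add: field_simps)
    then show ?thesis by (simp add: floor_diff_of_int)
  qed
  then show ?thesis by (auto simp: cell_def kk_def quantize_def fun_eq_iff)
qed

locale L7 =
  fixes P :: "'a measure" and X U :: "'a \<Rightarrow> real^'n" and p q :: "real^'n \<Rightarrow> real"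
    and M :: nat and L :: real
  assumes Pprob: "prob_space P"
    and Lpos: "L > 0"
    and p_nonneg: "\<And>x. p x \<ge> 0"
    and p_supp: "\<And>x. x \<notin> cbox 0 1 \<Longrightarrow> p x = 0"
    and p_lip: "\<And>x y. \<bar>p x - p y\<bar> \<le> L * l1_dist x y"
    and X_dens: "distributed P lborel X (\<lambda>x. ennreal (p x))"
    and U_meas: "U \<in> borel_measurable P"
    and U_unif: "distr P lborel U = uniform_measure lborel (cbox 0 (\<chi> i. 1 / real M))"
    and indep: "prob_space.indep_var P borel X borel U"
    and q_nonneg: "\<And>x. q x \<ge> 0"
    and Xbar_dens: "distributed P lborel (\<lambda>\<omega>. quantize M (X \<omega>) + U \<omega>) (\<lambda>x. ennreal (q x))"
    and Mpos: "M > 0"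
begin

definition "Zs = {z :: 'n \<Rightarrow> int. \<forall>i. 0 \<le> z i \<and> z i < int M}"
definition "vol = (1 / real M) ^ CARD('n)"
definition "F z = (\<integral>x. p x * indicator (cell M z) x \<partial>lborel) / vol"
definition "pb y = (\<Sum>z\<in>Zs. F z * indicator (cell M z) y)"

lemma Zs_eq: "Zs = Pi\<^sub>E UNIV (\<lambda>_. {0..<int M})"
  by (auto simp: Zs_def PiE_UNIV_domain)

lemma finite_Zs: "finite Zs"
  unfolding Zs_eq by (rule finite_PiE) auto

lemma card_Zs: "card Zs = M ^ CARD('n)"
  unfolding Zs_eq by (simp add: card_PiE)

lemma vol_pos: "vol > 0"
  using Mpos by (simp add: vol_def)

lemma p_meas[measurable]: "p \<in> borel_measurable borel"
proof -
  have "(\<lambda>x. ennreal (p x)) \<in> borel_measurable lborel"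
    using distributed_borel_measurable[OF X_dens] .
  then have "(\<lambda>x. enn2real (ennreal (p x))) \<in> borel_measurable lborel" by measurable
  then show ?thesis using p_nonneg by simp
qed

lemma p_out: "kk M y \<notin> Zs \<Longrightarrow> p y = 0"
  using kk_notin[OF Mpos, of y] p_zero_out[OF Lpos p_nonneg p_supp p_lip] by (auto simp: Zs_def)

lemma distrX: "distr P lborel X = density lborel (\<lambda>x. ennreal (p x))"
  using distributed_distr_eq_density[OF X_dens] .

lemma nn_p: "(\<integral>\<^sup>+x. ennreal (p x) \<partial>lborel) = 1"
proof -
  interpret prob_space P by (rule Pprob)
  have "prob_space (distr P lborel X)"
    by (rule prob_space_distr) (rule distributed_measurable[OF X_dens])
  then have "emeasure (density lborel (\<lambda>x. ennreal (p x))) UNIV = 1"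
    using distrX prob_space.emeasure_space_1 by fastforce
  then show ?thesis by (simp add: emeasure_density)
qed

lemma int_p: "integrable lborel p"
  by (rule integrableI_nn_integral_finite[where x=1]) (auto simp: nn_p p_nonneg)

lemma int_p_cell: "integrable lborel (\<lambda>x. p x * indicator (cell M z) x)"
  by (rule integrable_real_mult_indicator) (auto simp: int_p)

lemma F_vol: "F z * vol = (\<integral>x. p x * indicator (cell M z) x \<partial>lborel)"
  using vol_pos by (simp add: F_def)

lemma F_nonneg: "F z \<ge> 0"
  unfolding F_def using vol_pos p_nonneg by (intro divide_nonneg_pos integral_nonneg) auto

lemma nn_p_cell: "(\<integral>\<^sup>+x. ennreal (p x * indicator (cell M z) x) \<partial>lborel) = ennreal (F z * vol)"
  unfolding F_vol using int_p_cell p_nonneg by (intro nn_integral_eq_integral) auto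

lemma pb_nonneg: "pb y \<ge> 0"
  unfolding pb_def using F_nonneg by (intro sum_nonneg) auto

lemma pb_meas[measurable]: "pb \<in> borel_measurable borel"
  unfolding pb_def by measurable

lemma emeasure_B: "emeasure lborel (cbox (0::real^'n) (\<chi> i. 1 / real M)) = ennreal vol"
  using emeasure_cbox_c(1)[of "1/real M" "0::real^'n"] by (simp add: vol_def)

lemma inner_eq:
  fixes x :: "real^'n"
  assumes A[measurable]: "A \<in> sets borel"
  shows "(\<integral>\<^sup>+u. indicator A (quantize M x + u) \<partial>uniform_measure lborel (cbox 0 (\<chi> i. 1 / real M)))
     = emeasure lborel (A \<inter> cell M (kk M x)) / ennreal vol"
proof -
  define c where "c = quantize M x"
  let ?B = "cbox (0::real^'n) (\<chi> i. 1 / real M)"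
  have "(\<integral>\<^sup>+u. indicator A (c + u) \<partial>uniform_measure lborel ?B)
      = (\<integral>\<^sup>+u. indicator A (c + u) * indicator ?B u \<partial>lborel) / emeasure lborel ?B"
    by (rule nn_integral_uniform_measure) auto
  also have "(\<integral>\<^sup>+u. indicator A (c + u) * indicator ?B u \<partial>lborel)
      = (\<integral>\<^sup>+u. indicator A (c + u) * indicator (cell M (\<lambda>i. 0)) u \<partial>lborel)"
    by (rule nn_integral_cong_AE) (use AE_cbox_cell[OF Mpos] in \<open>auto split: split_indicator\<close>)
  also have "\<dots> = (\<integral>\<^sup>+y. indicator A y * indicator (cell M (\<lambda>i. 0)) (y - c) \<partial>lborel)"
  proof -
    have "(\<integral>\<^sup>+y. indicator A y * indicator (cell M (\<lambda>i. 0)) (y - c) \<partial>lborel)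
        = (\<integral>\<^sup>+y. indicator A y * indicator (cell M (\<lambda>i. 0)) (y - c) \<partial>distr lborel borel ((+) c))"
      by (simp add: lborel_distr_plus)
    also have "\<dots> = (\<integral>\<^sup>+u. indicator A (c + u) * indicator (cell M (\<lambda>i. 0)) (c + u - c) \<partial>lborel)"
      by (rule nn_integral_distr) auto
    finally show ?thesis by simp
  qed
  also have "\<dots> = (\<integral>\<^sup>+y. indicator (A \<inter> cell M (kk M x)) y \<partial>lborel)"
    by (rule nn_integral_cong) (auto simp: c_def cell_shift[OF Mpos] split: split_indicator)
  also have "\<dots> = emeasure lborel (A \<inter> cell M (kk M x))"
    by (rule nn_integral_indicator) auto
  finally show ?thesis by (simp add: c_def emeasure_B)
qed

end

context L7 begin

lemma split_cells:
  fixes G :: "('n \<Rightarrow> int) \<Rightarrow> ennreal" and x :: "real^'n"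
  shows "ennreal (p x) * G (kk M x) = (\<Sum>z\<in>Zs. ennreal (p x * indicator (cell M z) x) * G z)"
proof (cases "kk M x \<in> Zs")
  case True
  have "(\<Sum>z\<in>Zs. ennreal (p x * indicator (cell M z) x) * G z)
      = (\<Sum>z\<in>Zs. if z = kk M x then ennreal (p x) * G z else 0)"
    by (rule sum.cong) (auto simp: cell_def)
  also have "\<dots> = ennreal (p x) * G (kk M x)" using True finite_Zs by simp
  finally show ?thesis by simp
next
  case False
  then have "p x = 0" by (rule p_out)
  then show ?thesis by simp
qed

lemma distr_Xbar: "distr P lborel (\<lambda>\<omega>. quantize M (X \<omega>) + U \<omega>) = density lborel (\<lambda>y. ennreal (pb y))"
proof (rule measure_eqI)
  show "sets (distr P lborel (\<lambda>\<omega>. quantize M (X \<omega>) + U \<omega>)) = sets (density lborel (\<lambda>y. ennreal (pb y)))"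
    by simp
  fix A assume "A \<in> sets (distr P lborel (\<lambda>\<omega>. quantize M (X \<omega>) + U \<omega>))"
  then have A[measurable]: "A \<in> sets borel" by simp
  interpret prob_space P by (rule Pprob)
  have Xm[measurable]: "X \<in> borel_measurable P"
    using distributed_measurable[OF X_dens] by (metis measurable_cong_sets sets_lborel)
  have Um[measurable]: "U \<in> borel_measurable P" by (rule U_meas)
  define \<mu>X where "\<mu>X = distr P borel X"
  define \<mu>U where "\<mu>U = distr P borel U"
  have \<mu>X_eq: "\<mu>X = density lborel (\<lambda>x. ennreal (p x))"
    unfolding \<mu>X_def distrX[symmetric] by (rule distr_cong) auto
  have \<mu>U_eq: "\<mu>U = uniform_measure lborel (cbox 0 (\<chi> i. 1 / real M))"
    unfolding \<mu>U_def U_unif[symmetric] by (rule distr_cong) auto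
  interpret U: prob_space \<mu>U unfolding \<mu>U_def by (rule prob_space_distr) auto
  have joint: "\<mu>X \<Otimes>\<^sub>M \<mu>U = distr P (borel \<Otimes>\<^sub>M borel) (\<lambda>\<omega>. (X \<omega>, U \<omega>))"
    using indep unfolding indep_var_distribution_eq \<mu>X_def \<mu>U_def by simp
  define f :: "(real^'n) \<times> (real^'n) \<Rightarrow> real^'n" where "f = (\<lambda>v. quantize M (fst v) + snd v)"
  have fm[measurable]: "f \<in> borel_measurable (borel \<Otimes>\<^sub>M borel)" unfolding f_def by measurable
  have "emeasure (distr P lborel (\<lambda>\<omega>. quantize M (X \<omega>) + U \<omega>)) A
      = emeasure (distr (distr P (borel \<Otimes>\<^sub>M borel) (\<lambda>\<omega>. (X \<omega>, U \<omega>))) lborel f) A"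
    by (subst distr_distr) (auto simp: f_def comp_def)
  also have "\<dots> = emeasure (distr (\<mu>X \<Otimes>\<^sub>M \<mu>U) lborel f) A" by (simp add: joint)
  also have "\<dots> = (\<integral>\<^sup>+v. indicator A (f v) \<partial>(\<mu>X \<Otimes>\<^sub>M \<mu>U))"
  proof -
    have "sets (\<mu>X \<Otimes>\<^sub>M \<mu>U) = sets (borel \<Otimes>\<^sub>M borel)"
      unfolding \<mu>X_def \<mu>U_def by (intro sets_pair_measure_cong) auto
    then have fm2: "f \<in> measurable (\<mu>X \<Otimes>\<^sub>M \<mu>U) lborel"
      by (metis measurable_cong_sets sets_lborel fm)
    have "emeasure (distr (\<mu>X \<Otimes>\<^sub>M \<mu>U) lborel f) A = (\<integral>\<^sup>+v. indicator A v \<partial>distr (\<mu>X \<Otimes>\<^sub>M \<mu>U) lborel f)"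
      by (rule nn_integral_indicator[symmetric]) simp
    also have "\<dots> = (\<integral>\<^sup>+v. indicator A (f v) \<partial>(\<mu>X \<Otimes>\<^sub>M \<mu>U))"
      by (rule nn_integral_distr[OF fm2]) simp
    finally show ?thesis .
  qed
  also have "\<dots> = (\<integral>\<^sup>+x. \<integral>\<^sup>+u. indicator A (f (x, u)) \<partial>\<mu>U \<partial>\<mu>X)"
    by (rule U.nn_integral_fst[symmetric]) (auto simp: \<mu>X_def \<mu>U_def)
  also have "\<dots> = (\<integral>\<^sup>+x. ennreal (p x) * (\<integral>\<^sup>+u. indicator A (f (x, u)) \<partial>\<mu>U) \<partial>lborel)"
    unfolding \<mu>X_eq
  proof (rule nn_integral_density)
    show "(\<lambda>x. ennreal (p x)) \<in> borel_measurable lborel" by simp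
    have "(\<lambda>x. \<integral>\<^sup>+u. indicator A (f (x, u)) \<partial>\<mu>U) \<in> borel_measurable borel"
      by (rule U.borel_measurable_nn_integral_fst) (auto simp: \<mu>U_def)
    then show "(\<lambda>x. \<integral>\<^sup>+u. indicator A (f (x, u)) \<partial>\<mu>U) \<in> borel_measurable lborel" by simp
  qed
  also have "\<dots> = (\<integral>\<^sup>+x. ennreal (p x) * (emeasure lborel (A \<inter> cell M (kk M x)) / ennreal vol) \<partial>lborel)"
    by (rule nn_integral_cong) (simp add: \<mu>U_eq f_def inner_eq)
  also have "\<dots> = (\<integral>\<^sup>+x. (\<Sum>z\<in>Zs. ennreal (p x * indicator (cell M z) x) * (emeasure lborel (A \<inter> cell M z) / ennreal vol)) \<partial>lborel)"
    by (rule nn_integral_cong) (rule split_cells)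
  also have "\<dots> = (\<Sum>z\<in>Zs. (\<integral>\<^sup>+x. ennreal (p x * indicator (cell M z) x) \<partial>lborel) * (emeasure lborel (A \<inter> cell M z) / ennreal vol))"
    by (subst nn_integral_sum) (auto intro!: sum.cong nn_integral_multc)
  also have "\<dots> = (\<Sum>z\<in>Zs. ennreal (F z) * emeasure lborel (A \<inter> cell M z))"
  proof (rule sum.cong[OF refl])
    fix z
    have "ennreal (F z * vol) * (emeasure lborel (A \<inter> cell M z) / ennreal vol)
        = ennreal (F z) * emeasure lborel (A \<inter> cell M z) * ennreal vol / ennreal vol"
      using F_nonneg vol_pos by (simp add: ennreal_mult ennreal_times_divide mult_ac)
    also have "\<dots> = ennreal (F z) * emeasure lborel (A \<inter> cell M z)"
      using vol_pos by (intro ennreal_mult_divide_eq) auto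
    finally show "(\<integral>\<^sup>+x. ennreal (p x * indicator (cell M z) x) \<partial>lborel) * (emeasure lborel (A \<inter> cell M z) / ennreal vol)
        = ennreal (F z) * emeasure lborel (A \<inter> cell M z)" by (simp add: nn_p_cell)
  qed
  also have "\<dots> = (\<Sum>z\<in>Zs. (\<integral>\<^sup>+y. ennreal (F z) * indicator (A \<inter> cell M z) y \<partial>lborel))"
    by (rule sum.cong[OF refl]) (subst nn_integral_cmult, auto)
  also have "\<dots> = (\<integral>\<^sup>+y. (\<Sum>z\<in>Zs. ennreal (F z) * indicator (A \<inter> cell M z) y) \<partial>lborel)"
    by (subst nn_integral_sum) auto
  also have "\<dots> = (\<integral>\<^sup>+y. ennreal (pb y) * indicator A y \<partial>lborel)"
  proof (rule nn_integral_cong)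
    fix y
    have "ennreal (pb y) = (\<Sum>z\<in>Zs. ennreal (F z * indicator (cell M z) y))"
      unfolding pb_def using F_nonneg by (subst sum_ennreal) auto
    then show "(\<Sum>z\<in>Zs. ennreal (F z) * indicator (A \<inter> cell M z) y) = ennreal (pb y) * indicator A y"
      by (auto simp: sum_distrib_right ennreal_mult intro!: sum.cong split: split_indicator)
  qed
  also have "\<dots> = emeasure (density lborel (\<lambda>y. ennreal (pb y))) A"
    by (rule emeasure_density[symmetric]) auto
  finally show "emeasure (distr P lborel (\<lambda>\<omega>. quantize M (X \<omega>) + U \<omega>)) A = emeasure (density lborel (\<lambda>y. ennreal (pb y))) A" .
qed

lemma q_pb: "AE y in lborel. q y = pb y"
proof -
  have "density lborel (\<lambda>y. ennreal (q y)) = density lborel (\<lambda>y. ennreal (pb y))"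
    using distributed_distr_eq_density[OF Xbar_dens] distr_Xbar by simp
  then have "AE y in lborel. ennreal (q y) = ennreal (pb y)"
    using distributed_borel_measurable[OF Xbar_dens]
    by (subst (asm) sigma_finite_measure.density_unique_iff[OF sigma_finite_lborel]) auto
  then show ?thesis using q_nonneg pb_nonneg by (auto elim!: AE_mp)
qed

end


lemma tlnt_bound:
  fixes t B :: real
  assumes "0 \<le> t" "t \<le> B"
  shows "\<bar>t * ln t\<bar> \<le> 1 + B\<^sup>2"
proof (cases "t \<le> 1")
  case True
  show ?thesis
  proof (cases "t = 0")
    case False
    then have t: "t > 0" using assms by simp
    have "ln (1 / t) \<le> 1 / t - 1" using t by (intro ln_le_minus_one) auto
    then have "- ln t \<le> 1 / t - 1" using t by (simp add: ln_div)
    then have "t * (- ln t) \<le> t * (1 / t - 1)" using t by (intro mult_left_mono) auto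
    also have "\<dots> \<le> 1" using t by (simp add: field_simps)
    finally have "- (t * ln t) \<le> 1" by simp
    moreover have "t * ln t \<le> 0" using t True by (simp add: mult_nonneg_nonpos)
    ultimately show ?thesis by (smt (verit) zero_le_power2)
  qed simp
next
  case False
  then have t: "t > 1" by simp
  have "ln t \<le> t - 1" using t by (intro ln_le_minus_one) auto
  then have "t * ln t \<le> t * (t - 1)" using t by (intro mult_left_mono) auto
  also have "\<dots> \<le> B\<^sup>2" using t assms by (simp add: power2_eq_square) (smt (verit) mult_mono)
  finally show ?thesis using t by (smt (verit) ln_ge_zero mult_nonneg_nonneg)
qed

context L7 begin

definition "dlt = L * real CARD('n) / real M"

lemma int_ind: fixes z :: "'n \<Rightarrow> int" shows "integrable lborel (\<lambda>y. c * indicator (cell M z) y :: real)"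
  using emeasure_cell[OF Mpos, of z] by (intro integrable_mult_right integrable_real_indicator) auto

lemma int_const_cell: fixes z :: "'n \<Rightarrow> int" shows "(\<integral>y. c * indicator (cell M z) y \<partial>lborel) = c * vol"
  using measure_cell[OF Mpos, of z] by (simp add: vol_def)

lemma p_cell_lower:
  assumes x: "x \<in> cell M z" and y: "y \<in> cell M z"
  shows "p y \<ge> p x - dlt"
proof -
  have "\<bar>p x - p y\<bar> \<le> L * l1_dist x y" by (rule p_lip)
  also have "\<dots> \<le> L * (real CARD('n) / real M)"
    using cell_close[OF Mpos x y] Lpos by (intro mult_left_mono) auto
  finally show ?thesis by (simp add: dlt_def)
qed

lemma p_le_F:
  assumes x: "x \<in> cell M z"
  shows "p x \<le> F z + dlt"
proof -
  have "(p x - dlt) * vol = (\<integral>y. (p x - dlt) * indicator (cell M z) y \<partial>lborel)"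
    by (rule int_const_cell[symmetric])
  also have "\<dots> \<le> (\<integral>y. p y * indicator (cell M z) y \<partial>lborel)"
    using p_cell_lower[OF x] by (intro integral_mono int_ind int_p_cell) (auto split: split_indicator)
  also have "\<dots> = F z * vol" by (simp add: F_vol)
  finally show ?thesis using vol_pos by simp
qed

lemma plnp_meas[measurable]: "(\<lambda>y. p y * ln (p y)) \<in> borel_measurable borel"
  by measurable

lemma int_plnp: "integrable lborel (\<lambda>y. p y * ln (p y))"
proof (rule integrableI_bounded_set[where A="cbox 0 1" and B="1 + (2*L)\<^sup>2"])
  show "AE x in lborel. x \<in> cbox 0 1 \<longrightarrow> norm (p x * ln (p x)) \<le> 1 + (2 * L)\<^sup>2"
    using p_nonneg p_bounded[OF Lpos p_nonneg p_supp p_lip]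
    by (intro AE_I2 impI, simp only: real_norm_def, intro tlnt_bound) auto
  show "AE x in lborel. x \<notin> cbox 0 1 \<longrightarrow> p x * ln (p x) = 0"
    using p_supp by auto
  show "emeasure lborel (cbox (0::real^'n) 1) < \<infinity>" by (rule emeasure_lborel_cbox_finite)
qed auto

lemma int_plnp_cell: "integrable lborel (\<lambda>y. p y * ln (p y) * indicator (cell M z) y)"
  by (rule integrable_real_mult_indicator) (auto simp: int_plnp)

lemma cell_bounds:
  shows "F z * vol * ln (F z) \<le> (\<integral>y. p y * ln (p y) * indicator (cell M z) y \<partial>lborel)"
    and "(\<integral>y. p y * ln (p y) * indicator (cell M z) y \<partial>lborel) \<le> F z * vol * ln (F z) + vol * dlt"
proof -
  have dlt: "dlt \<ge> 0" using Lpos by (simp add: dlt_def)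
  have "F z \<ge> 0" by (rule F_nonneg)
  have "(F z * vol * ln (F z) \<le> (\<integral>y. p y * ln (p y) * indicator (cell M z) y \<partial>lborel)) \<and>
        ((\<integral>y. p y * ln (p y) * indicator (cell M z) y \<partial>lborel) \<le> F z * vol * ln (F z) + vol * dlt)"
  proof (cases "F z = 0")
    case True
    then have "(\<integral>y. p y * indicator (cell M z) y \<partial>lborel) = 0" using F_vol[of z] by simp
    then have "AE y in lborel. p y * indicator (cell M z) y = 0"
      using int_p_cell p_nonneg by (subst (asm) integral_nonneg_eq_0_iff_AE) auto
    then have "AE y in lborel. p y * ln (p y) * indicator (cell M z) y = 0"
      by (auto elim!: AE_mp split: split_indicator)
    then have "(\<integral>y. p y * ln (p y) * indicator (cell M z) y \<partial>lborel) = 0"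
      by (simp add: integral_eq_zero_AE)
    then show ?thesis using True vol_pos dlt by simp
  next
    case False
    then have Fp: "F z > 0" using F_nonneg[of z] by simp
    have lo: "p y * ln (F z) + p y - F z \<le> p y * ln (p y)" for y
    proof (cases "p y = 0")
      case False
      then have t: "p y > 0" using p_nonneg[of y] by simp
      have "ln (F z / p y) \<le> F z / p y - 1" using t Fp by (intro ln_le_minus_one) auto
      then have "ln (F z) - ln (p y) \<le> F z / p y - 1" using t Fp by (simp add: ln_div)
      then have "p y * (ln (F z) - ln (p y)) \<le> p y * (F z / p y - 1)" using t by (intro mult_left_mono) auto
      moreover have "p y * (F z / p y - 1) = F z - p y" using t by (simp add: field_simps)
      ultimately show ?thesis by (simp add: right_diff_distrib)
    qed (use Fp in simp)
    have hi: "p y * ln (p y) \<le> (ln (F z) + dlt / F z) * p y" if y: "y \<in> cell M z" for y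
    proof (cases "p y = 0")
      case False
      then have t: "p y > 0" using p_nonneg[of y] by simp
      have "ln (p y) \<le> ln (F z + dlt)" using t p_le_F[OF y] by simp
      also have "\<dots> = ln (F z) + ln (1 + dlt / F z)"
      proof -
        have e: "F z + dlt = F z * (1 + dlt / F z)" using Fp by (simp add: field_simps)
        have "1 + dlt / F z > 0" using Fp dlt by (simp add: add_pos_nonneg)
        then show ?thesis unfolding e using Fp by (simp add: ln_mult)
      qed
      also have "\<dots> \<le> ln (F z) + dlt / F z"
        using Fp dlt by (simp add: ln_add_one_self_le_self)
      finally show ?thesis using t by (simp add: mult_left_mono mult.commute)
    qed simp
    have "F z * vol * ln (F z) = (\<integral>y. (ln (F z) + 1) * (p y * indicator (cell M z) y) - F z * indicator (cell M z) y \<partial>lborel)"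
    proof -
      have "(\<integral>y. (ln (F z) + 1) * (p y * indicator (cell M z) y) - F z * indicator (cell M z) y \<partial>lborel)
          = (\<integral>y. (ln (F z) + 1) * (p y * indicator (cell M z) y) \<partial>lborel) - (\<integral>y. F z * indicator (cell M z) y \<partial>lborel)"
        by (rule Bochner_Integration.integral_diff[OF integrable_mult_right[OF int_p_cell] int_ind])
      also have "\<dots> = (ln (F z) + 1) * (F z * vol) - F z * vol"
      proof -
        have a: "(\<integral>y. F z * indicator (cell M z) y \<partial>lborel) = F z * vol" by (rule int_const_cell)
        have b: "(\<integral>y. (ln (F z) + 1) * (p y * indicator (cell M z) y) \<partial>lborel) = (ln (F z) + 1) * (F z * vol)"
          by (simp only: Bochner_Integration.integral_mult_right_zero F_vol)
        show ?thesis unfolding a b ..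
      qed
      finally show ?thesis by (simp add: algebra_simps)
    qed
    also have "\<dots> \<le> (\<integral>y. p y * ln (p y) * indicator (cell M z) y \<partial>lborel)"
    proof (rule integral_mono[OF _ int_plnp_cell])
      show "integrable lborel (\<lambda>y. (ln (F z) + 1) * (p y * indicator (cell M z) y) - F z * indicator (cell M z) y)"
        by (rule Bochner_Integration.integrable_diff[OF integrable_mult_right[OF int_p_cell] int_ind])
      fix y show "(ln (F z) + 1) * (p y * indicator (cell M z) y) - F z * indicator (cell M z) y \<le> p y * ln (p y) * indicator (cell M z) y"
        using lo[of y] by (auto split: split_indicator simp: algebra_simps)
    qed
    finally have A: "F z * vol * ln (F z) \<le> (\<integral>y. p y * ln (p y) * indicator (cell M z) y \<partial>lborel)" .
    have "(\<integral>y. p y * ln (p y) * indicator (cell M z) y \<partial>lborel) \<le> (\<integral>y. (ln (F z) + dlt / F z) * (p y * indicator (cell M z) y) \<partial>lborel)"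
      using hi int_p_cell int_plnp_cell
      by (intro integral_mono) (auto split: split_indicator)
    also have "\<dots> = (ln (F z) + dlt / F z) * (F z * vol)"
      by (simp add: F_vol)
    also have "\<dots> = F z * vol * ln (F z) + vol * dlt" using Fp by (simp add: field_simps)
    finally show ?thesis using A by simp
  qed
  then show "F z * vol * ln (F z) \<le> (\<integral>y. p y * ln (p y) * indicator (cell M z) y \<partial>lborel)"
    and "(\<integral>y. p y * ln (p y) * indicator (cell M z) y \<partial>lborel) \<le> F z * vol * ln (F z) + vol * dlt"
    by auto
qed

end

context L7 begin

lemma sum_ind: "(\<Sum>z\<in>Zs. g z * indicator (cell M z) y) = (if kk M y \<in> Zs then g (kk M y) else (0::real))"
proof -
  have "(\<Sum>z\<in>Zs. g z * indicator (cell M z) y) = (\<Sum>z\<in>Zs. if z = kk M y then g z else 0)"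
    by (rule sum.cong) (auto simp: cell_def)
  then show ?thesis using finite_Zs by simp
qed

lemma E1: "(\<integral>y. p y * ln (p y) \<partial>lborel) = (\<Sum>z\<in>Zs. \<integral>y. p y * ln (p y) * indicator (cell M z) y \<partial>lborel)"
proof -
  have "(\<integral>y. p y * ln (p y) \<partial>lborel) = (\<integral>y. (\<Sum>z\<in>Zs. p y * ln (p y) * indicator (cell M z) y) \<partial>lborel)"
    by (rule Bochner_Integration.integral_cong[OF refl]) (auto simp: sum_ind p_out)
  also have "\<dots> = (\<Sum>z\<in>Zs. \<integral>y. p y * ln (p y) * indicator (cell M z) y \<partial>lborel)"
    by (rule Bochner_Integration.integral_sum) (rule int_plnp_cell)
  finally show ?thesis .
qed

lemma E2: "(\<integral>y. pb y * ln (pb y) \<partial>lborel) = (\<Sum>z\<in>Zs. F z * vol * ln (F z))"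
proof -
  have pb_alt: "pb y = (if kk M y \<in> Zs then F (kk M y) else 0)" for y
    unfolding pb_def by (rule sum_ind)
  have "(\<integral>y. pb y * ln (pb y) \<partial>lborel) = (\<integral>y. (\<Sum>z\<in>Zs. (F z * ln (F z)) * indicator (cell M z) y) \<partial>lborel)"
    by (rule Bochner_Integration.integral_cong[OF refl]) (simp only: sum_ind pb_alt, simp)
  also have "\<dots> = (\<Sum>z\<in>Zs. \<integral>y. (F z * ln (F z)) * indicator (cell M z) y \<partial>lborel)"
    by (rule Bochner_Integration.integral_sum) (rule int_ind)
  also have "\<dots> = (\<Sum>z\<in>Zs. F z * vol * ln (F z))"
    by (rule sum.cong[OF refl]) (simp only: int_const_cell, simp)
  finally show ?thesis .
qed

lemma E3: "diff_entropy q = - (\<integral>y. pb y * ln (pb y) \<partial>lborel)"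
proof -
  have qm: "q \<in> borel_measurable lborel"
    using distributed_real_measurable[OF _ Xbar_dens] q_nonneg by blast
  have "(\<integral>y. q y * ln (q y) \<partial>lborel) = (\<integral>y. pb y * ln (pb y) \<partial>lborel)"
    by (rule integral_cong_AE) (use qm q_pb in \<open>auto elim!: AE_mp\<close>)
  then show ?thesis by (simp add: diff_entropy_def)
qed

lemma main_bound:
  shows "0 \<le> diff_entropy q - diff_entropy p" and "diff_entropy q - diff_entropy p \<le> dlt"
proof -
  have D: "diff_entropy q - diff_entropy p = (\<Sum>z\<in>Zs. (\<integral>y. p y * ln (p y) * indicator (cell M z) y \<partial>lborel) - F z * vol * ln (F z))"
    unfolding E3 E2 by (simp add: diff_entropy_def E1 sum_subtractf)
  show "0 \<le> diff_entropy q - diff_entropy p"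
    unfolding D using cell_bounds(1) by (intro sum_nonneg) auto
  have "diff_entropy q - diff_entropy p \<le> (\<Sum>z\<in>Zs. vol * dlt)"
    unfolding D using cell_bounds(2) by (intro sum_mono) (smt (verit))
  also have "\<dots> = real (M ^ CARD('n)) * (1 / real M) ^ CARD('n) * dlt"
    by (simp add: card_Zs vol_def)
  also have "\<dots> = dlt"
    using Mpos by (simp add: power_one_over[symmetric] power_mult_distrib[symmetric])
  finally show "diff_entropy q - diff_entropy p \<le> dlt" .
qed

end


lemma alpha_pos: "alpha > 0"
proof -
  have "sqrt (exp 2 + 4) > sqrt ((exp 1)\<^sup>2)"
    by (simp add: exp_double[symmetric] power2_eq_square[symmetric] del: real_sqrt_abs)
  then have "sqrt (exp 2 + 4) > exp 1" by simp
  then show ?thesis by (simp add: alpha_def)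
qed

lemma alpha_small: "exp 2 < 1 / alpha"
proof -
  define s where "s = sqrt (exp 2 + 4)"
  define e where "e = exp (1::real)"
  have e: "e > 0" by (simp add: e_def)
  have s2: "s * s = e * e + 4" unfolding s_def e_def
    by (simp add: exp_double[symmetric] power2_eq_square[symmetric])
  have a: "alpha = (s - e) / (2 * e)" by (simp add: alpha_def s_def e_def)
  have a1: "alpha + 1 = (s + e) / (2 * e)" unfolding a using e by (simp add: field_simps)
  have "alpha * (alpha + 1) = ((s - e) * (s + e)) / ((2 * e) * (2 * e))" unfolding a1 unfolding a
    by (simp only: times_divide_times_eq)
  also have "\<dots> = (s * s - e * e) / (4 * e * e)" by (simp add: algebra_simps)
  also have "\<dots> = 4 / (4 * (e * e))" using s2 by (simp add: mult.assoc)
  also have "\<dots> = 1 / (e * e)" by simp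
  finally have aa: "alpha * (alpha + 1) = 1 / (e * e)" .
  have "alpha < alpha * (alpha + 1)" using alpha_pos by (simp add: algebra_simps)
  then have "alpha < 1 / (e * e)" using aa by simp
  then have "e * e < 1 / alpha" using alpha_pos e by (simp add: field_simps)
  moreover have "exp 2 = e * e" by (simp add: e_def exp_double[symmetric] power2_eq_square[symmetric])
  ultimately show ?thesis by simp
qed

lemma eta_pos: "L > 0 \<Longrightarrow> K > 0 \<Longrightarrow> eta K L > 0"
  by (simp add: eta_def)

theorem lemma7:
  fixes P :: "'a measure"
    and X U :: "'a \<Rightarrow> real^'n"
    and p q :: "real^'n \<Rightarrow> real"
    and M :: nat and L :: real
  assumes "prob_space P"
    and "L > 0"
    and p_nonneg: "\<And>x. p x \<ge> 0"
    and p_supp: "\<And>x. x \<notin> cbox 0 1 \<Longrightarrow> p x = 0"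
    and p_lip: "\<And>x y. \<bar>p x - p y\<bar> \<le> L * l1_dist x y"
    and X_dens: "distributed P lborel X (\<lambda>x. ennreal (p x))"
    and U_meas: "U \<in> borel_measurable P"
    and U_unif: "distr P lborel U = uniform_measure lborel (cbox 0 (\<chi> i. 1 / real M))"
    and indep: "prob_space.indep_var P borel X borel U"
    and q_nonneg: "\<And>x. q x \<ge> 0"
    and Xbar_dens: "distributed P lborel (\<lambda>\<omega>. quantize M (X \<omega>) + U \<omega>) (\<lambda>x. ennreal (q x))"
    and M_large: "real M \<ge> 1 / (alpha * eta CARD('n) L)"
  shows "\<bar>diff_entropy q - diff_entropy p\<bar>
           \<le> L * real CARD('n) / (2 * real M) * ln (real M * eta CARD('n) L)"
proof -
  have eta: "eta CARD('n) L > 0" using assms(2) by (intro eta_pos) auto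
  have ae: "alpha * eta CARD('n) L > 0" using eta alpha_pos by simp
  have "1 / (alpha * eta CARD('n) L) > 0" using ae by simp
  then have "real M > 0" using M_large by linarith
  then have Mpos: "M > 0" by simp
  interpret L7 P X U p q M L
    by (rule L7.intro[OF assms(1-11) Mpos])
  have Me: "real M * eta CARD('n) L \<ge> 1 / alpha"
  proof -
    have "1 / alpha = (1 / (alpha * eta CARD('n) L)) * eta CARD('n) L" using eta by simp
    also have "\<dots> \<le> real M * eta CARD('n) L" using M_large eta by (intro mult_right_mono) auto
    finally show ?thesis .
  qed
  then have "exp 2 < real M * eta CARD('n) L" using alpha_small by simp
  then have ln2: "2 < ln (real M * eta CARD('n) L)"
    using ln_less_cancel_iff[of "exp 2"] by (metis exp_gt_zero ln_exp order.strict_trans)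
  have "\<bar>diff_entropy q - diff_entropy p\<bar> \<le> dlt" using main_bound by simp
  also have "\<dots> = L * real CARD('n) / (2 * real M) * 2" by (simp add: dlt_def)
  also have "\<dots> \<le> L * real CARD('n) / (2 * real M) * ln (real M * eta CARD('n) L)"
    using ln2 assms(2) Mpos by (intro mult_left_mono) auto
  finally show ?thesis .
qed


end
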